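(* Under the hypotheses and notation of the context, for every $\epsilon>0$ there exists $\mu_\epsilon>1$ such that for all $1\le\mu\le\mu_\epsilon$ and all $(x,t)\in\mathbb T^N\times[0,\infty)$, $$P_{\eta\mu}[u](x,t)\ge P_{\eta1}[u](x,t)-\epsilon.$$ Consequently, if $m_{\eta1}:=\lim_{t\to\infty}\max\{0,\sup_xP_{\eta1}[u](x,t)\}>0$, then there is $\mu_\eta>1$ such that $\sup_{x}P_{\eta\mu}[u](x,t)\ge m_{\eta1}/2$ for all $t\ge0$ and $1<\mu<\mu_\eta$.
   Context: $\mathbb T^N=\mathbb R^N/\mathbb Z^N$. $u\in C(\mathbb T^N\times[0,\infty))$ is a bounded function (the bounded viscosity solution of the equation $u_t+\sup_\theta\{-\mathrm{tr}(A_\theta D^2u)+H_\theta(x,Du)\}=0$ with ergodic constant normalized to $0$, under the standing assumptions of bounded Lipschitz diffusions, locally Lipschitz Hamiltonians, convexity in $p$, and uniform Lipschitz bounds in $x$), and $v$ is a bounded continuous function on $\mathbb T^N$. For $\eta>0$, $\mu\ge1$: $P_{\eta\mu}[u](x,t)=\sup_{s\ge t}\{u(x,t)-v(x)-\mu(u(x,s)-v(x))-\mu\eta(s-t)\}$. It is known (Lemma 4.2) that $t\mapsto\max\{0,\sup_xP_{\eta1}[u](x,t)\}$ is nonincreasing, so $m_{\eta1}$ is well defined. *)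

theory Defs
  imports "HOL-Analysis.Analysis"
begin

text \<open>Functions on the torus T^N = R^N / Z^N are represented as Z^N-periodic
functions on real^'n (N = CARD('n)).\<close>

definition zperiodic :: "(real^'n \<Rightarrow> 'b) \<Rightarrow> bool" where
  "zperiodic f \<longleftrightarrow> (\<forall>x k. (\<forall>i. k $ i \<in> \<int>) \<longrightarrow> f (x + k) = f x)"

definition Pop :: "real \<Rightarrow> real \<Rightarrow> (real^'n \<Rightarrow> real \<Rightarrow> real) \<Rightarrow> (real^'n \<Rightarrow> real)
    \<Rightarrow> real^'n \<Rightarrow> real \<Rightarrow> real" where
  "Pop \<eta> \<mu> u v x t = (SUP s\<in>{t..}. u x t - v x - \<mu> * (u x s - v x) - \<mu> * \<eta> * (s - t))"

end

theory Submission
  imports Defs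
begin

lemma Pop_bdd:
  fixes u :: "'a \<Rightarrow> real \<Rightarrow> real" and v :: "'a \<Rightarrow> real"
  assumes K: "\<forall>x s. s \<ge> 0 \<longrightarrow> \<bar>u x s - v x\<bar> \<le> K" and eta: "\<eta> > 0"
    and t: "t \<ge> 0" and mu: "\<mu> \<ge> 0"
  shows "bdd_above ((\<lambda>s. u x t - v x - \<mu> * (u x s - v x) - \<mu> * \<eta> * (s - t)) ` {t..})"
    and "\<forall>s\<in>{t..}. u x t - v x - \<mu> * (u x s - v x) - \<mu> * \<eta> * (s - t) \<le> K + \<mu> * K"
proof -
  show b: "\<forall>s\<in>{t..}. u x t - v x - \<mu> * (u x s - v x) - \<mu> * \<eta> * (s - t) \<le> K + \<mu> * K"
  proof
    fix s assume s: "s \<in> {t..}"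
    have a: "\<bar>u x t - v x\<bar> \<le> K" using K t by auto
    have bs: "\<bar>u x s - v x\<bar> \<le> K" using K t s by (meson atLeast_iff order_trans)
    have "- (\<mu> * (u x s - v x)) \<le> \<mu> * K"
      using mult_left_mono[OF bs mu] by (smt (verit) abs_ge_minus_self abs_mult mu abs_of_nonneg mult_minus_right)
    moreover have "\<mu> * \<eta> * (s - t) \<ge> 0" using s mu eta by simp
    ultimately show "u x t - v x - \<mu> * (u x s - v x) - \<mu> * \<eta> * (s - t) \<le> K + \<mu> * K"
      using a by linarith
  qed
  then show "bdd_above ((\<lambda>s. u x t - v x - \<mu> * (u x s - v x) - \<mu> * \<eta> * (s - t)) ` {t..})"
    by (intro bdd_aboveI2) auto
qed

lemma Pop_le:
  fixes u :: "real^'n \<Rightarrow> real \<Rightarrow> real" and v :: "real^'n \<Rightarrow> real"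
  assumes K: "\<forall>x s. s \<ge> 0 \<longrightarrow> \<bar>u x s - v x\<bar> \<le> K" and eta: "\<eta> > 0"
    and t: "t \<ge> 0" and mu: "\<mu> \<ge> 0"
  shows "Pop \<eta> \<mu> u v x t \<le> K + \<mu> * K"
  unfolding Pop_def using Pop_bdd(2)[OF K eta t mu, of x]
  by (intro cSUP_least) auto

lemma Pop_ge0:
  fixes u :: "real^'n \<Rightarrow> real \<Rightarrow> real" and v :: "real^'n \<Rightarrow> real"
  assumes K: "\<forall>x s. s \<ge> 0 \<longrightarrow> \<bar>u x s - v x\<bar> \<le> K" and eta: "\<eta> > 0"
    and t: "t \<ge> 0"
  shows "Pop \<eta> 1 u v x t \<ge> 0"
proof -
  have "u x t - v x - 1 * (u x t - v x) - 1 * \<eta> * (t - t) \<le> Pop \<eta> 1 u v x t"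
    unfolding Pop_def using Pop_bdd(1)[OF K eta t, of 1 x]
    by (intro cSUP_upper) auto
  then show ?thesis by simp
qed

lemma part1:
  fixes u :: "real^'n \<Rightarrow> real \<Rightarrow> real" and v :: "real^'n \<Rightarrow> real"
  assumes K: "\<forall>x s. s \<ge> 0 \<longrightarrow> \<bar>u x s - v x\<bar> \<le> K" and eta: "\<eta> > 0"
    and e: "\<epsilon> > 0"
  shows "\<exists>\<mu>\<epsilon>>1. \<forall>\<mu>. 1 \<le> \<mu> \<and> \<mu> \<le> \<mu>\<epsilon> \<longrightarrow>
            (\<forall>x. \<forall>t\<ge>0. Pop \<eta> \<mu> u v x t \<ge> Pop \<eta> 1 u v x t - \<epsilon>)"
proof -
  have K0: "K \<ge> 0" using K by (meson abs_ge_zero order_trans order_refl)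
  define c where "c = 3 * K + 1"
  have c: "c > 0" using K0 by (simp add: c_def)
  define me where "me = 1 + \<epsilon> / (2 * c)"
  have "me > 1" using c e by (simp add: me_def)
  moreover have "\<forall>\<mu>. 1 \<le> \<mu> \<and> \<mu> \<le> me \<longrightarrow>
            (\<forall>x. \<forall>t\<ge>0. Pop \<eta> \<mu> u v x t \<ge> Pop \<eta> 1 u v x t - \<epsilon>)"
  proof (intro allI impI)
    fix \<mu> x t assume mu: "1 \<le> \<mu> \<and> \<mu> \<le> me" and t: "(t::real) \<ge> 0"
    define f where "f = (\<lambda>\<mu> s. u x t - v x - \<mu> * (u x s - v x) - \<mu> * \<eta> * (s - t))"
    define S where "S = Pop \<eta> 1 u v x t"
    have S0: "S \<ge> 0" unfolding S_def using Pop_ge0[OF K eta t] .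
    define \<delta> where "\<delta> = min 1 (\<epsilon>/2)"
    have d: "\<delta> > 0" using e by (simp add: \<delta>_def)
    have SS: "S = (SUP s\<in>{t..}. f 1 s)" unfolding S_def Pop_def f_def by simp
    have "S - \<delta> < (SUP s\<in>{t..}. f 1 s)" using SS d by simp
    then obtain s where s: "s \<ge> t" and fs: "S - \<delta> < f 1 s"
      using less_cSUP_iff[of "{t..}" "f 1" "S - \<delta>"] Pop_bdd(1)[OF K eta t, of 1 x]
      unfolding f_def by auto
    have a: "\<bar>u x t - v x\<bar> \<le> K" using K t by auto
    have bs: "\<bar>u x s - v x\<bar> \<le> K" using K t s by (meson order_trans)
    have "\<eta> * (s - t) < 2 * K + 1"
      using fs S0 a bs unfolding \<delta>_def f_def by (auto simp: abs_le_iff)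
    then have B: "(u x s - v x) + \<eta> * (s - t) \<le> c" using bs unfolding c_def by (auto simp: abs_le_iff)
    have m1: "\<mu> - 1 \<ge> 0" using mu by simp
    have "(\<mu> - 1) * ((u x s - v x) + \<eta> * (s - t)) \<le> (\<mu> - 1) * c"
      using mult_left_mono[OF B m1] .
    also have "\<dots> \<le> (\<epsilon> / (2 * c)) * c"
      using mu c by (intro mult_right_mono) (auto simp: me_def)
    also have "\<dots> = \<epsilon> / 2" using c by simp
    finally have E: "(\<mu> - 1) * ((u x s - v x) + \<eta> * (s - t)) \<le> \<epsilon> / 2" .
    have "f \<mu> s = f 1 s - (\<mu> - 1) * ((u x s - v x) + \<eta> * (s - t))"
      unfolding f_def by (simp add: algebra_simps)
    then have "f \<mu> s > S - \<epsilon>" using E fs unfolding \<delta>_def by linarith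
    moreover have "f \<mu> s \<le> Pop \<eta> \<mu> u v x t"
      unfolding Pop_def f_def using Pop_bdd(1)[OF K eta t, of \<mu> x] mu s
      by (intro cSUP_upper) auto
    ultimately show "Pop \<eta> \<mu> u v x t \<ge> Pop \<eta> 1 u v x t - \<epsilon>" unfolding S_def by linarith
  qed
  ultimately show ?thesis by blast
qed

theorem lemma4p3:
  fixes u :: "real^'n \<Rightarrow> real \<Rightarrow> real" and v :: "real^'n \<Rightarrow> real"
    and \<eta> :: real
  assumes eta_pos: "\<eta> > 0"
    and u_per: "\<And>t. zperiodic (\<lambda>x. u x t)"
    and u_cont: "continuous_on (UNIV \<times> {0..}) (\<lambda>(x, t). u x t)"
    and u_bdd: "\<exists>M. \<forall>x t. t \<ge> 0 \<longrightarrow> \<bar>u x t\<bar> \<le> M"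
    and v_per: "zperiodic v"
    and v_cont: "continuous_on UNIV v"
    and v_bdd: "\<exists>M. \<forall>x. \<bar>v x\<bar> \<le> M"
    and lemma4p2: "antimono_on {0..} (\<lambda>t. max 0 (SUP x. Pop \<eta> 1 u v x t))"
  shows "(\<forall>\<epsilon>>0. \<exists>\<mu>\<epsilon>>1. \<forall>\<mu>. 1 \<le> \<mu> \<and> \<mu> \<le> \<mu>\<epsilon> \<longrightarrow>
            (\<forall>x. \<forall>t\<ge>0. Pop \<eta> \<mu> u v x t \<ge> Pop \<eta> 1 u v x t - \<epsilon>))
       \<and> (\<forall>m. ((\<lambda>t. max 0 (SUP x. Pop \<eta> 1 u v x t)) \<longlongrightarrow> m) at_top \<longrightarrow> m > 0 \<longrightarrow>
            (\<exists>\<mu>\<eta>>1. \<forall>t\<ge>0. \<forall>\<mu>. 1 < \<mu> \<and> \<mu> < \<mu>\<eta> \<longrightarrow>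
               (SUP x. Pop \<eta> \<mu> u v x t) \<ge> m / 2))"
proof -
  obtain Mu where Mu: "\<forall>x t. t \<ge> 0 \<longrightarrow> \<bar>u x t\<bar> \<le> Mu" using u_bdd by blast
  obtain Mv where Mv: "\<forall>x. \<bar>v x\<bar> \<le> Mv" using v_bdd by blast
  have K: "\<forall>x s. s \<ge> 0 \<longrightarrow> \<bar>u x s - v x\<bar> \<le> Mu + Mv"
  proof (intro allI impI)
    fix x s assume "(s::real) \<ge> 0"
    then have "\<bar>u x s\<bar> \<le> Mu" "\<bar>v x\<bar> \<le> Mv" using Mu Mv by auto
    then show "\<bar>u x s - v x\<bar> \<le> Mu + Mv" by linarith
  qed
  have P1: "\<forall>\<epsilon>>0. \<exists>\<mu>\<epsilon>>1. \<forall>\<mu>. 1 \<le> \<mu> \<and> \<mu> \<le> \<mu>\<epsilon> \<longrightarrow>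
            (\<forall>x. \<forall>t\<ge>0. Pop \<eta> \<mu> u v x t \<ge> Pop \<eta> 1 u v x t - \<epsilon>)"
    using part1[OF K eta_pos] by blast
  have P2: "\<exists>\<mu>\<eta>>1. \<forall>t\<ge>0. \<forall>\<mu>. 1 < \<mu> \<and> \<mu> < \<mu>\<eta> \<longrightarrow>
               (SUP x. Pop \<eta> \<mu> u v x t) \<ge> m / 2"
    if lim: "((\<lambda>t. max 0 (SUP x. Pop \<eta> 1 u v x t)) \<longlongrightarrow> m) at_top" and m: "m > 0" for m
  proof -
    define g where "g = (\<lambda>t. max 0 (SUP x. Pop \<eta> 1 u v x t))"
    have gm: "g t \<ge> m" if t: "t \<ge> 0" for t
    proof (rule ccontr)
      assume "\<not> g t \<ge> m"
      then have lt: "g t < m" by simp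
      have "\<forall>\<^sub>F s in at_top. g s > (g t + m) / 2"
        using order_tendstoD(1)[OF lim[folded g_def], of "(g t + m)/2"] lt by simp
      moreover have "\<forall>\<^sub>F s in at_top. s \<ge> t" by (rule eventually_ge_at_top)
      ultimately have "\<forall>\<^sub>F s in at_top. g s > (g t + m) / 2 \<and> s \<ge> t"
        by (rule eventually_conj)
      then obtain s where s: "g s > (g t + m) / 2" "s \<ge> t"
        unfolding eventually_at_top_linorder by blast
      have "g s \<le> g t" using lemma4p2 t s unfolding g_def monotone_on_def by auto
      moreover have "(g t + m) / 2 > g t" using lt by simp
      ultimately show False using s by linarith
    qed
    obtain me where me: "me > 1" and hme: "\<forall>\<mu>. 1 \<le> \<mu> \<and> \<mu> \<le> me \<longrightarrow>
            (\<forall>x. \<forall>t\<ge>0. Pop \<eta> \<mu> u v x t \<ge> Pop \<eta> 1 u v x t - m/4)"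
      using P1 m by (metis zero_less_divide_iff zero_less_numeral)
    have "\<forall>t\<ge>0. \<forall>\<mu>. 1 < \<mu> \<and> \<mu> < me \<longrightarrow> (SUP x. Pop \<eta> \<mu> u v x t) \<ge> m / 2"
    proof (intro allI impI)
      fix t \<mu> :: real assume t: "t \<ge> 0" and mu: "1 < \<mu> \<and> \<mu> < me"
      have bd1: "bdd_above (range (\<lambda>x. Pop \<eta> 1 u v x t))"
        using Pop_le[OF K eta_pos t, of 1] by (intro bdd_aboveI2) auto
      have bdm: "bdd_above (range (\<lambda>x. Pop \<eta> \<mu> u v x t))"
        using Pop_le[OF K eta_pos t, of \<mu>] mu by (intro bdd_aboveI2) auto
      have "g t \<ge> m" using gm t by simp
      then have Sm: "(SUP x. Pop \<eta> 1 u v x t) \<ge> m" using m unfolding g_def by linarith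
      then have "(SUP x. Pop \<eta> 1 u v x t) - m/4 < (SUP x. Pop \<eta> 1 u v x t)" using m by simp
      then obtain x where x: "(SUP x. Pop \<eta> 1 u v x t) - m/4 < Pop \<eta> 1 u v x t"
        using less_cSUP_iff[of UNIV "\<lambda>x. Pop \<eta> 1 u v x t"] bd1 by auto
      have "Pop \<eta> \<mu> u v x t \<ge> Pop \<eta> 1 u v x t - m/4" using hme mu t by auto
      moreover have "Pop \<eta> \<mu> u v x t \<le> (SUP x. Pop \<eta> \<mu> u v x t)"
        using bdm by (intro cSUP_upper) auto
      ultimately show "(SUP x. Pop \<eta> \<mu> u v x t) \<ge> m / 2" using x Sm by linarith
    qed
    then show ?thesis using me by blast
  qed
  show ?thesis using P1 P2 by blast
qed

end
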